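(* Let $G_1$ be a finite additive group of order $v$ with a subgroup $H$ of order $h$. If there exists a $(G_1,H,k,1)$-BRDF and a nested $(h,k,1)$-BIBD, then there exists a nested $(v,k,1)$-BIBD.
   Context: A $(G,H,k,\lambda)$-RDF is a collection of $k$-subsets of $G$ (base blocks) whose differences $x-y$ ($x\ne y$ in a common base block) cover every element of $G\setminus H$ exactly $\lambda$ times and no element of $H$; it is a BRDF if moreover all base blocks are disjoint from $H$ and the base blocks and their negatives are pairwise disjoint. A $(v,k,\lambda)$-BIBD is a set $X$ of $v$ points with a multiset $\mathcal{A}$ of $k$-subsets such that every pair of distinct points lies in exactly $\lambda$ blocks (partial: at most $\lambda$); it is nested if there is $\phi:\mathcal{A}\to X$ such that $\{A\cup\{\phi(A)\}:A\in\mathcal{A}\}$ is the block multiset of a partial $(v,k+1,\lambda+1)$-BIBD on $X$ (in particular $\phi(A)\notin A$). *)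

theory Defs
  imports Main "HOL-Library.Multiset"
begin

definition add_subgroup :: "'g::ab_group_add set \<Rightarrow> bool" where
  "add_subgroup H \<longleftrightarrow> 0 \<in> H \<and> (\<forall>x\<in>H. \<forall>y\<in>H. x - y \<in> H)"

definition diff_count :: "'g::ab_group_add set list \<Rightarrow> 'g \<Rightarrow> nat" where
  "diff_count F g = sum_list (map (\<lambda>B. card {(x, y). x \<in> B \<and> y \<in> B \<and> x \<noteq> y \<and> x - y = g}) F)"

text \<open>(G,H,k,lambda)-RDF, G being the whole finite group type.\<close>
definition RDF :: "'g::{ab_group_add,finite} set \<Rightarrow> nat \<Rightarrow> nat \<Rightarrow> 'g set list \<Rightarrow> bool" where
  "RDF H k lam F \<longleftrightarrow>
     (\<forall>B\<in>set F. card B = k) \<and>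
     (\<forall>g. g \<notin> H \<longrightarrow> diff_count F g = lam) \<and>
     (\<forall>g\<in>H. diff_count F g = 0)"

definition BRDF :: "'g::{ab_group_add,finite} set \<Rightarrow> nat \<Rightarrow> nat \<Rightarrow> 'g set list \<Rightarrow> bool" where
  "BRDF H k lam F \<longleftrightarrow> RDF H k lam F \<and>
     (\<forall>B\<in>set F. B \<inter> H = {}) \<and>
     (\<forall>i<length F. \<forall>j<length F.
        (i \<noteq> j \<longrightarrow> F ! i \<inter> F ! j = {} \<and> uminus ` (F ! i) \<inter> uminus ` (F ! j) = {}) \<and>
        F ! i \<inter> uminus ` (F ! j) = {})"

definition BIBD :: "nat \<Rightarrow> nat \<Rightarrow> nat \<Rightarrow> 'a set \<Rightarrow> 'a set multiset \<Rightarrow> bool" where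
  "BIBD v k lam X A \<longleftrightarrow> finite X \<and> card X = v \<and>
     (\<forall>B\<in>#A. B \<subseteq> X \<and> card B = k) \<and>
     (\<forall>x\<in>X. \<forall>y\<in>X. x \<noteq> y \<longrightarrow> size (filter_mset (\<lambda>B. x \<in> B \<and> y \<in> B) A) = lam)"

definition partial_BIBD :: "nat \<Rightarrow> nat \<Rightarrow> nat \<Rightarrow> 'a set \<Rightarrow> 'a set multiset \<Rightarrow> bool" where
  "partial_BIBD v k lam X A \<longleftrightarrow> finite X \<and> card X = v \<and>
     (\<forall>B\<in>#A. B \<subseteq> X \<and> card B = k) \<and>
     (\<forall>x\<in>X. \<forall>y\<in>X. x \<noteq> y \<longrightarrow> size (filter_mset (\<lambda>B. x \<in> B \<and> y \<in> B) A) \<le> lam)"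

text \<open>A nested BIBD: each block A (with multiplicity) is paired with its nesting point phi(A);
  P is the multiset of pairs (A, phi(A)).\<close>
definition nested_BIBD :: "nat \<Rightarrow> nat \<Rightarrow> nat \<Rightarrow> 'a set \<Rightarrow> ('a set \<times> 'a) multiset \<Rightarrow> bool" where
  "nested_BIBD v k lam X P \<longleftrightarrow>
     BIBD v k lam X (image_mset fst P) \<and>
     (\<forall>(B, p)\<in>#P. p \<in> X \<and> p \<notin> B) \<and>
     partial_BIBD v (k + 1) (lam + 1) X (image_mset (\<lambda>(B, p). insert p B) P)"

end

theory Submission
  imports Defs
begin

lemma cnt_image:
  "size (filter_mset Q (image_mset f M)) = size (filter_mset (\<lambda>x. Q (f x)) M)"
  by (induction M) auto

lemma cnt_transfer:
  assumes "inj_on f X" "\<forall>B\<in>#A. B \<subseteq> X" "x \<in> X" "y \<in> X"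
  shows "size (filter_mset (\<lambda>B. f x \<in> B \<and> f y \<in> B) (image_mset (image f) A))
       = size (filter_mset (\<lambda>B. x \<in> B \<and> y \<in> B) A)"
proof -
  have "filter_mset (\<lambda>B. f x \<in> f ` B \<and> f y \<in> f ` B) A = filter_mset (\<lambda>B. x \<in> B \<and> y \<in> B) A"
  proof (rule filter_mset_cong0)
    fix B assume "B \<in># A"
    then have "B \<subseteq> X" using assms(2) by auto
    then show "(f x \<in> f ` B \<and> f y \<in> f ` B) = (x \<in> B \<and> y \<in> B)"
      using assms(1,3,4) by (metis inj_on_image_mem_iff)
  qed
  then show ?thesis by (simp add: cnt_image)
qed

lemma nested_transfer:
  assumes N: "nested_BIBD v k lam X P" and inj: "inj_on f X"
  shows "nested_BIBD v k lam (f ` X) (image_mset (\<lambda>(B, p). (f ` B, f p)) P)"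
proof -
  let ?T = "\<lambda>(B, p). (f ` B, f p)"
  let ?I = "\<lambda>(B::'a set, p). insert p B"
  have e1: "image_mset fst (image_mset ?T P) = image_mset (image f) (image_mset fst P)"
    by (simp add: multiset.map_comp comp_def case_prod_beta)
  have e2: "image_mset (\<lambda>(B, p). insert p B) (image_mset ?T P) = image_mset (image f) (image_mset ?I P)"
    by (simp add: multiset.map_comp comp_def case_prod_beta)
  have B: "BIBD v k lam X (image_mset fst P)" and Pt: "\<forall>(B, p)\<in>#P. p \<in> X \<and> p \<notin> B"
    and PB: "partial_BIBD v (k + 1) (lam + 1) X (image_mset ?I P)"
    using N unfolding nested_BIBD_def by auto
  have cardX: "finite (f ` X) \<and> card (f ` X) = v"
    using B inj unfolding BIBD_def by (simp add: card_image)
  have "BIBD v k lam (f ` X) (image_mset (image f) (image_mset fst P))"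
    unfolding BIBD_def
  proof (intro conjI ballI impI)
    show "finite (f ` X)" "card (f ` X) = v" using cardX by auto
  next
    fix B' assume "B' \<in># image_mset (image f) (image_mset fst P)"
    then obtain B where "B \<in># image_mset fst P" "B' = f ` B" by auto
    moreover have "B \<subseteq> X \<and> card B = k" using B \<open>B \<in># image_mset fst P\<close> unfolding BIBD_def by blast
    ultimately show "B' \<subseteq> f ` X" "card B' = k"
      using card_image[OF inj_on_subset[OF inj]] by auto
  next
    fix x' y' assume "x' \<in> f ` X" "y' \<in> f ` X" "x' \<noteq> y'"
    then obtain x y where "x \<in> X" "y \<in> X" "x' = f x" "y' = f y" "x \<noteq> y" by auto
    then show "size (filter_mset (\<lambda>B. x' \<in> B \<and> y' \<in> B) (image_mset (image f) (image_mset fst P))) = lam"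
      using B inj cnt_transfer[of f X "image_mset fst P" x y] unfolding BIBD_def by auto
  qed
  moreover have "partial_BIBD v (k+1) (lam+1) (f ` X) (image_mset (image f) (image_mset ?I P))"
    unfolding partial_BIBD_def
  proof (intro conjI ballI impI)
    show "finite (f ` X)" "card (f ` X) = v" using cardX by auto
  next
    fix B' assume "B' \<in># image_mset (image f) (image_mset ?I P)"
    then obtain B where "B \<in># image_mset ?I P" "B' = f ` B" by auto
    moreover have "B \<subseteq> X \<and> card B = k + 1" using PB \<open>B \<in># image_mset ?I P\<close> unfolding partial_BIBD_def by blast
    ultimately show "B' \<subseteq> f ` X" "card B' = k + 1"
      using card_image[OF inj_on_subset[OF inj]] by auto
  next
    fix x' y' assume "x' \<in> f ` X" "y' \<in> f ` X" "x' \<noteq> y'"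
    then obtain x y where "x \<in> X" "y \<in> X" "x' = f x" "y' = f y" "x \<noteq> y" by auto
    then show "size (filter_mset (\<lambda>B. x' \<in> B \<and> y' \<in> B) (image_mset (image f) (image_mset ?I P))) \<le> lam + 1"
      using PB inj cnt_transfer[of f X "image_mset ?I P" x y] unfolding partial_BIBD_def by auto
  qed
  moreover have "\<forall>(B', p')\<in>#image_mset ?T P. p' \<in> f ` X \<and> p' \<notin> B'"
  proof
    fix z assume "z \<in># image_mset ?T P"
    then obtain B p where z: "z = (f ` B, f p)" "(B, p) \<in># P" by auto
    then have "p \<in> X" "p \<notin> B" using Pt by auto
    moreover have "B \<subseteq> X" using z(2) B unfolding BIBD_def by force
    ultimately show "case z of (B', p') \<Rightarrow> p' \<in> f ` X \<and> p' \<notin> B'"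
      using z(1) inj by (simp add: inj_on_image_mem_iff)
  qed
  ultimately show ?thesis unfolding nested_BIBD_def e1 e2 by simp
qed


definition pc :: "'a set multiset \<Rightarrow> 'a \<Rightarrow> 'a \<Rightarrow> nat" where
  "pc A x y = size (filter_mset (\<lambda>B. x \<in> B \<and> y \<in> B) A)"

lemma pc_zero: "(\<And>B. B \<in># A \<Longrightarrow> \<not> (x \<in> B \<and> y \<in> B)) \<Longrightarrow> pc A x y = 0"
  unfolding pc_def by (induction A) auto

lemma pc_plus: "pc (A + B) x y = pc A x y + pc B x y"
  unfolding pc_def by simp

lemma pc_sum: "finite I \<Longrightarrow> pc (image_mset g (\<Sum>C\<in>I. M C)) x y = (\<Sum>C\<in>I. pc (image_mset g (M C)) x y)"
  apply (induction I rule: finite_induct)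
   apply (simp add: pc_def)
  apply (simp add: pc_plus)
  done

lemma pc_mset_set: "finite S \<Longrightarrow> pc (image_mset g (mset_set S)) x y = card {s\<in>S. x \<in> g s \<and> y \<in> g s}"
  unfolding pc_def cnt_image by simp

lemma mem_trans: "((x::'g::ab_group_add) \<in> (+) g ` B) = (x - g \<in> B)"
proof
  assume "x \<in> (+) g ` B" then show "x - g \<in> B" by auto
next
  assume "x - g \<in> B" then have "g + (x - g) \<in> (+) g ` B" by blast
  then show "x \<in> (+) g ` B" by simp
qed

lemma sg_neg: "add_subgroup H \<Longrightarrow> x \<in> H \<Longrightarrow> - x \<in> H"
proof -
  assume "add_subgroup H" "x \<in> H"
  then have "0 - x \<in> H" unfolding add_subgroup_def by blast
  then show "- x \<in> H" by simp
qed

lemma sg_diff: "add_subgroup H \<Longrightarrow> x \<in> H \<Longrightarrow> y \<in> H \<Longrightarrow> x - y \<in> H"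
  unfolding add_subgroup_def by blast

lemma sg_zero: "add_subgroup H \<Longrightarrow> 0 \<in> H"
  unfolding add_subgroup_def by blast

lemma sg_add: "add_subgroup H \<Longrightarrow> x \<in> H \<Longrightarrow> y \<in> H \<Longrightarrow> x + y \<in> H"
proof -
  assume a: "add_subgroup H" "x \<in> H" "y \<in> H"
  then have "x - (- y) \<in> H" using sg_diff sg_neg by blast
  then show "x + y \<in> H" by simp
qed

lemma coset_eq:
  assumes "add_subgroup (H::'g::ab_group_add set)" "x \<in> (+) g ` H"
  shows "(+) g ` H = (+) x ` H"
proof -
  have a: "x - g \<in> H" using assms(2) mem_trans by blast
  have "z - g \<in> H \<longleftrightarrow> z - x \<in> H" for z
  proof
    assume "z - g \<in> H"
    then have "(z - g) - (x - g) \<in> H" using sg_diff[OF assms(1) _ a] by blast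
    then show "z - x \<in> H" by simp
  next
    assume "z - x \<in> H"
    then have "(z - x) + (x - g) \<in> H" using sg_add[OF assms(1) _ a] by blast
    then show "z - g \<in> H" by simp
  qed
  then show ?thesis using mem_trans by blast
qed

lemma coset_same:
  assumes "add_subgroup (H::'g::ab_group_add set)" "x \<in> (+) g ` H" "y \<in> (+) g ` H"
  shows "x - y \<in> H"
proof -
  have "x - g \<in> H" "y - g \<in> H" using assms mem_trans by blast+
  then have "(x - g) - (y - g) \<in> H" using sg_diff[OF assms(1)] by blast
  then show ?thesis by simp
qed

lemma coset_self:
  assumes "add_subgroup (H::'g::ab_group_add set)"
  shows "x \<in> (+) x ` H"
proof -
  have "x - x \<in> H" using sg_zero[OF assms] by simp
  then show ?thesis by (simp only: mem_trans)
qed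

lemma coset_mem:
  assumes "add_subgroup (H::'g::ab_group_add set)" "x - y \<in> H"
  shows "y \<in> (+) x ` H"
proof -
  have "- (x - y) \<in> H" using sg_neg[OF assms] .
  then have "y - x \<in> H" by simp
  then show ?thesis by (simp only: mem_trans)
qed


lemma diff_count_nth:
  "diff_count F d = (\<Sum>i<length F. card {(a, b). a \<in> F ! i \<and> b \<in> F ! i \<and> a \<noteq> b \<and> a - b = d})"
  unfolding diff_count_def by (simp add: sum_list_sum_nth atLeast0LessThan)

lemma card_trans_pairs:
  fixes x y :: "'g::{ab_group_add,finite}"
  assumes "x \<noteq> y"
  shows "card {g. x - g \<in> B \<and> y - g \<in> B} = card {(a, b). a \<in> B \<and> b \<in> B \<and> a \<noteq> b \<and> a - b = x - y}"
proof -
  have eq: "{(a, b). a \<in> B \<and> b \<in> B \<and> a \<noteq> b \<and> a - b = x - y} = (\<lambda>g. (x - g, y - g)) ` {g. x - g \<in> B \<and> y - g \<in> B}"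
  proof (intro equalityI subsetI)
    fix z assume "z \<in> {(a, b). a \<in> B \<and> b \<in> B \<and> a \<noteq> b \<and> a - b = x - y}"
    then obtain a b where z: "z = (a, b)" "a \<in> B" "b \<in> B" "a - b = x - y" by auto
    have "b = y - (x - a)" using z(4) by (simp add: algebra_simps)
    moreover have "a = x - (x - a)" by simp
    ultimately have "z = (x - (x - a), y - (x - a))" "x - (x - a) \<in> B \<and> y - (x - a) \<in> B"
      using z by auto
    then show "z \<in> (\<lambda>g. (x - g, y - g)) ` {g. x - g \<in> B \<and> y - g \<in> B}" by blast
  next
    fix z assume "z \<in> (\<lambda>g. (x - g, y - g)) ` {g. x - g \<in> B \<and> y - g \<in> B}"
    then obtain g where "z = (x - g, y - g)" "x - g \<in> B" "y - g \<in> B" by auto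
    then show "z \<in> {(a, b). a \<in> B \<and> b \<in> B \<and> a \<noteq> b \<and> a - b = x - y}" using assms by auto
  qed
  have "inj_on (\<lambda>g. (x - g, y - g)) {g. x - g \<in> B \<and> y - g \<in> B}"
    by (rule inj_onI) auto
  then show ?thesis unfolding eq by (simp add: card_image)
qed

lemma P1_fst:
  fixes F :: "'g::{ab_group_add,finite} set list"
  assumes "x \<noteq> y"
  shows "pc (image_mset (\<lambda>(i, g). (+) g ` (F ! i)) (mset_set ({..<length F} \<times> UNIV))) x y = diff_count F (x - y)"
proof -
  have "{s \<in> {..<length F} \<times> UNIV. x \<in> (case s of (i, g) \<Rightarrow> (+) g ` (F ! i)) \<and> y \<in> (case s of (i, g) \<Rightarrow> (+) g ` (F ! i))}
      = Sigma {..<length F} (\<lambda>i. {g. x - g \<in> F ! i \<and> y - g \<in> F ! i})"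
    by (auto simp: mem_trans)
  then have "pc (image_mset (\<lambda>(i, g). (+) g ` (F ! i)) (mset_set ({..<length F} \<times> UNIV))) x y
     = card (Sigma {..<length F} (\<lambda>i. {g. x - g \<in> F ! i \<and> y - g \<in> F ! i}))"
    by (simp add: pc_mset_set)
  also have "\<dots> = (\<Sum>i<length F. card {g. x - g \<in> F ! i \<and> y - g \<in> F ! i})"
    by (simp add: card_SigmaI)
  also have "\<dots> = diff_count F (x - y)"
    unfolding diff_count_nth using card_trans_pairs[OF assms] by simp
  finally show ?thesis .
qed

lemma P1_ins:
  fixes F :: "'g::{ab_group_add,finite} set list"
  assumes "x \<noteq> y" and BR: "BRDF H k 1 F" and sg: "add_subgroup H"
  shows "pc (image_mset (\<lambda>(i, g). insert g ((+) g ` (F ! i))) (mset_set ({..<length F} \<times> UNIV))) x y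
    \<le> diff_count F (x - y) + (if x - y \<in> H then 0 else 1)"
proof -
  let ?S = "{..<length F} \<times> (UNIV :: 'g set)"
  let ?A = "{s \<in> ?S. x \<in> (case s of (i, g) \<Rightarrow> (+) g ` (F ! i)) \<and> y \<in> (case s of (i, g) \<Rightarrow> (+) g ` (F ! i))}"
  let ?A' = "{s \<in> ?S. x \<in> (case s of (i, g) \<Rightarrow> insert g ((+) g ` (F ! i))) \<and> y \<in> (case s of (i, g) \<Rightarrow> insert g ((+) g ` (F ! i)))}"
  let ?E = "{s \<in> ?S. (snd s = x \<and> y - x \<in> F ! fst s) \<or> (snd s = y \<and> x - y \<in> F ! fst s)}"
  have cA: "card ?A = diff_count F (x - y)"
    using P1_fst[OF assms(1), of F] by (simp add: pc_mset_set)
  have sub: "?A' \<subseteq> ?A \<union> ?E"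
    using assms(1) by (auto simp: mem_trans)
  have "card ?A' \<le> card (?A \<union> ?E)" by (rule card_mono[OF _ sub]) simp
  also have "\<dots> \<le> card ?A + card ?E" by (rule card_Un_le)
  finally have c1: "card ?A' \<le> card ?A + card ?E" .
  have brd: "RDF H k 1 F \<and> (\<forall>B\<in>set F. B \<inter> H = {}) \<and>
     (\<forall>i<length F. \<forall>j<length F.
        (i \<noteq> j \<longrightarrow> F ! i \<inter> F ! j = {} \<and> uminus ` (F ! i) \<inter> uminus ` (F ! j) = {}) \<and>
        F ! i \<inter> uminus ` (F ! j) = {})" using BR unfolding BRDF_def .
  have disjH: "\<forall>B\<in>set F. B \<inter> H = {}" using brd by (elim conjE)
  have disj: "\<And>i j. i < length F \<Longrightarrow> j < length F \<Longrightarrow> i \<noteq> j \<Longrightarrow> F ! i \<inter> F ! j = {}"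
  proof -
    fix i j assume "i < length F" "j < length F" "i \<noteq> j"
    then show "F ! i \<inter> F ! j = {}" using brd by simp
  qed
  have disjn: "\<And>i j. i < length F \<Longrightarrow> j < length F \<Longrightarrow> F ! i \<inter> uminus ` (F ! j) = {}"
  proof -
    fix i j assume "i < length F" "j < length F"
    then show "F ! i \<inter> uminus ` (F ! j) = {}" using brd by simp
  qed
  have cE: "card ?E \<le> (if x - y \<in> H then 0 else 1)"
  proof (cases "x - y \<in> H")
    case True
    then have "- (x - y) \<in> H" using sg_neg[OF sg] by blast
    then have yx: "y - x \<in> H" by simp
    have "?E = {}"
    proof (rule ccontr)
      assume "?E \<noteq> {}"
      then obtain i g where i: "i < length F" and o: "(g = x \<and> y - x \<in> F ! i) \<or> (g = y \<and> x - y \<in> F ! i)" by auto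
      have "F ! i \<inter> H = {}" using disjH nth_mem[OF i] by blast
      then show False using o True yx by blast
    qed
    then show ?thesis using True by simp
  next
    case False
    have fE: "finite ?E" by simp
    have "\<forall>s1\<in>?E. \<forall>s2\<in>?E. s1 = s2"
    proof (intro ballI)
      fix s1 s2 assume s1: "s1 \<in> ?E" and s2: "s2 \<in> ?E"
      obtain i g where ig: "s1 = (i, g)" "i < length F" "(g = x \<and> y - x \<in> F ! i) \<or> (g = y \<and> x - y \<in> F ! i)"
        using s1 by auto
      obtain j g' where jg: "s2 = (j, g')" "j < length F" "(g' = x \<and> y - x \<in> F ! j) \<or> (g' = y \<and> x - y \<in> F ! j)"
        using s2 by auto
      have u1: "y - x \<in> uminus ` (F ! j)" if "x - y \<in> F ! j" by (rule rev_image_eqI[OF that]) simp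
      have u2: "x - y \<in> uminus ` (F ! j)" if "y - x \<in> F ! j" by (rule rev_image_eqI[OF that]) simp
      have ij: "i = j" if a: "d \<in> F ! i" "d \<in> F ! j" for d
      proof (rule ccontr)
        assume "i \<noteq> j"
        then have "F ! i \<inter> F ! j = {}" by (rule disj[OF ig(2) jg(2)])
        then show False using a by blast
      qed
      have n0: "F ! i \<inter> uminus ` (F ! j) = {}" by (rule disjn[OF ig(2) jg(2)])
      have h1: "s1 = s2" if "g = x" "y - x \<in> F ! i" "g' = x" "y - x \<in> F ! j"
        using ij[OF that(2) that(4)] that(1,3) ig(1) jg(1) by simp
      have h2: "s1 = s2" if "g = y" "x - y \<in> F ! i" "g' = y" "x - y \<in> F ! j"
        using ij[OF that(2) that(4)] that(1,3) ig(1) jg(1) by simp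
      have h3: "False" if "y - x \<in> F ! i" "x - y \<in> F ! j"
        using n0 u1[OF that(2)] that(1) by blast
      have h4: "False" if "x - y \<in> F ! i" "y - x \<in> F ! j"
        using n0 u2[OF that(2)] that(1) by blast
      show "s1 = s2" using ig(3) jg(3) h1 h2 h3 h4 by blast
    qed
    then have "card ?E \<le> Suc 0" using card_le_Suc0_iff_eq[OF fE] by blast
    then show ?thesis using False by simp
  qed
  have "pc (image_mset (\<lambda>(i, g). insert g ((+) g ` (F ! i))) (mset_set ?S)) x y = card ?A'"
    by (simp add: pc_mset_set)
  then show ?thesis using c1 cA cE by linarith
qed


lemma coset_sum_pc:
  fixes H :: "'g::{ab_group_add,finite} set" and Qf :: "'g set \<Rightarrow> 'b multiset"
  assumes sg: "add_subgroup H"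
    and sub: "\<And>C B. C \<in> range (\<lambda>g. (+) g ` H) \<Longrightarrow> B \<in># image_mset f (Qf C) \<Longrightarrow> B \<subseteq> C"
    and xy: "x \<noteq> y"
  shows "pc (image_mset f (\<Sum>C\<in>range (\<lambda>g. (+) g ` H). Qf C)) x y
    = (if x - y \<in> H then pc (image_mset f (Qf ((+) x ` H))) x y else 0)"
proof -
  let ?Cs = "range (\<lambda>g. (+) g ` H)"
  let ?c0 = "(+) x ` H"
  let ?t = "\<lambda>C. pc (image_mset f (Qf C)) x y"
  have fin: "finite ?Cs" by simp
  have c0: "?c0 \<in> ?Cs" by simp
  have z: "?t C = 0" if "C \<in> ?Cs - {?c0}" for C
  proof (rule pc_zero)
    fix B assume B: "B \<in># image_mset f (Qf C)"
    have "C \<in> ?Cs" and ne: "C \<noteq> ?c0" using that by blast+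
    then obtain g where C: "C = (+) g ` H" by blast
    have "x \<notin> C"
    proof
      assume "x \<in> C"
      then have "C = ?c0" using coset_eq[OF sg] C by blast
      then show False using ne by blast
    qed
    then show "\<not> (x \<in> B \<and> y \<in> B)" using sub[OF _ B] that by blast
  qed
  have "pc (image_mset f (\<Sum>C\<in>?Cs. Qf C)) x y = (\<Sum>C\<in>?Cs. ?t C)"
    by (rule pc_sum[OF fin])
  also have "\<dots> = ?t ?c0 + (\<Sum>C\<in>?Cs - {?c0}. ?t C)"
    by (rule sum.remove[OF fin c0])
  also have "(\<Sum>C\<in>?Cs - {?c0}. ?t C) = 0"
    using z by (simp add: sum.neutral)
  also have "?t ?c0 = (if x - y \<in> H then ?t ?c0 else 0)"
  proof (cases "x - y \<in> H")
    case False
    have "?t ?c0 = 0"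
    proof (rule pc_zero)
      fix B assume B: "B \<in># image_mset f (Qf ?c0)"
      have "y \<notin> ?c0" using coset_same[OF sg coset_self[OF sg, of x]] False by blast
      then show "\<not> (x \<in> B \<and> y \<in> B)" using sub[OF c0 B] by blast
    qed
    then show ?thesis by simp
  qed simp
  finally show ?thesis by simp
qed

theorem mainTheorem15:
  fixes H :: "'g::{ab_group_add,finite} set" and v h k :: nat
  assumes "v = card (UNIV :: 'g set)"
    and "add_subgroup H"
    and "h = card H"
    and "\<exists>F. BRDF H k 1 F"
    and "\<exists>(X :: nat set) P. nested_BIBD h k 1 X P"
  shows "\<exists>(X :: nat set) P. nested_BIBD v k 1 X P"
proof -
  note sg = assms(2)
  obtain F where BR: "BRDF H k 1 F" using assms(4) by blast
  obtain X0 :: "nat set" and Q0 where N0: "nested_BIBD h k 1 X0 Q0" using assms(5) by blast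
  let ?Cs = "range (\<lambda>g. (+) g ` H)"
  have ex: "\<forall>C\<in>?Cs. \<exists>Q. nested_BIBD h k 1 C Q"
  proof
    fix C assume "C \<in> ?Cs"
    then obtain g where C: "C = (+) g ` H" by auto
    have fX0: "finite X0" "card X0 = h" using N0 unfolding nested_BIBD_def BIBD_def by auto
    have "finite H" by simp
    then obtain \<psi> where bij: "bij_betw \<psi> X0 H"
      using finite_same_card_bij[OF fX0(1)] fX0(2) assms(3) by metis
    have inj: "inj_on (\<lambda>z. g + \<psi> z) X0" using bij unfolding bij_betw_def inj_on_def by auto
    have img: "(\<lambda>z. g + \<psi> z) ` X0 = C"
      unfolding C using bij_betw_imp_surj_on[OF bij] by (auto simp: image_image[symmetric])
    show "\<exists>Q. nested_BIBD h k 1 C Q" using nested_transfer[OF N0 inj] img by auto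
  qed
  then obtain Qf where Qf: "\<And>C. C \<in> ?Cs \<Longrightarrow> nested_BIBD h k 1 C (Qf C)" by metis
  define S where "S = {..<length F} \<times> (UNIV::'g set)"
  define P1 where "P1 = image_mset (\<lambda>(i, g). ((+) g ` (F ! i), g)) (mset_set S)"
  define P2 where "P2 = (\<Sum>C\<in>?Cs. Qf C)"
  define P where "P = P1 + P2"
  let ?I = "\<lambda>(B::'g set, p). insert p B"
  have finS: "finite S" by (simp add: S_def)
  have finCs: "finite ?Cs" by simp
  have brd: "RDF H k 1 F \<and> (\<forall>B\<in>set F. B \<inter> H = {})" using BR unfolding BRDF_def by blast
  then have cardF: "\<And>B. B \<in> set F \<Longrightarrow> card B = k" and disjH: "\<And>B. B \<in> set F \<Longrightarrow> B \<inter> H = {}"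
    and dc1: "\<And>d. d \<notin> H \<Longrightarrow> diff_count F d = 1" and dc0: "\<And>d. d \<in> H \<Longrightarrow> diff_count F d = 0"
    unfolding RDF_def by blast+
  have dc: "diff_count F d = (if d \<in> H then 0 else 1)" for d using dc0 dc1 by simp
  have e1: "image_mset fst P1 = image_mset (\<lambda>(i, g). (+) g ` (F ! i)) (mset_set S)"
    unfolding P1_def by (simp add: multiset.map_comp comp_def split_def)
  have e2: "image_mset ?I P1 = image_mset (\<lambda>(i, g). insert g ((+) g ` (F ! i))) (mset_set S)"
    unfolding P1_def by (simp add: multiset.map_comp comp_def split_def)
  have QB: "BIBD h k 1 C (image_mset fst (Qf C))" and Qn: "\<forall>(B, p)\<in>#Qf C. p \<in> C \<and> p \<notin> B"
    and QP: "partial_BIBD h (k + 1) (1 + 1) C (image_mset ?I (Qf C))" if "C \<in> ?Cs" for C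
    using Qf[OF that] unfolding nested_BIBD_def by blast+
  have subF: "B \<subseteq> C" if "C \<in> ?Cs" "B \<in># image_mset fst (Qf C)" for C B
    using QB[OF that(1)] that(2) unfolding BIBD_def by blast
  have subI: "B \<subseteq> C" if "C \<in> ?Cs" "B \<in># image_mset ?I (Qf C)" for C B
    using QP[OF that(1)] that(2) unfolding partial_BIBD_def by blast
  have P2f: "pc (image_mset fst P2) x y = (if x - y \<in> H then 1 else 0)" if xy: "x \<noteq> y" for x y
  proof -
    have "pc (image_mset fst P2) x y = (if x - y \<in> H then pc (image_mset fst (Qf ((+) x ` H))) x y else 0)"
      unfolding P2_def by (rule coset_sum_pc[OF sg subF xy])
    moreover have "pc (image_mset fst (Qf ((+) x ` H))) x y = 1" if "x - y \<in> H"
    proof -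
      have "x \<in> (+) x ` H" "y \<in> (+) x ` H" using coset_self[OF sg] coset_mem[OF sg that] by auto
      then show ?thesis using QB[of "(+) x ` H"] xy unfolding BIBD_def pc_def by blast
    qed
    ultimately show ?thesis by simp
  qed
  have P2i: "pc (image_mset ?I P2) x y \<le> (if x - y \<in> H then 2 else 0)" if xy: "x \<noteq> y" for x y
  proof -
    have "pc (image_mset ?I P2) x y = (if x - y \<in> H then pc (image_mset ?I (Qf ((+) x ` H))) x y else 0)"
      unfolding P2_def by (rule coset_sum_pc[OF sg subI xy])
    moreover have "pc (image_mset ?I (Qf ((+) x ` H))) x y \<le> 2" if "x - y \<in> H"
    proof -
      have "x \<in> (+) x ` H" "y \<in> (+) x ` H" using coset_self[OF sg] coset_mem[OF sg that] by auto
      then have "pc (image_mset ?I (Qf ((+) x ` H))) x y \<le> 1 + 1"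
        using QP[of "(+) x ` H"] xy unfolding partial_BIBD_def pc_def by blast
      then show ?thesis by simp
    qed
    ultimately show ?thesis by simp
  qed
  have memP2: "\<exists>C\<in>?Cs. z \<in># Qf C" if "z \<in># P2" for z
    using that unfolding P2_def set_mset_sum[OF finCs] by blast
  have memP1: "\<exists>i g. i < length F \<and> z = ((+) g ` (F ! i), g)" if "z \<in># P1" for z
    using that finS unfolding P1_def S_def by auto
  have cardT: "card ((+) g ` B) = card B" for g :: 'g and B
    by (rule card_image) (auto simp: inj_on_def)
  have notin: "g \<notin> (+) g ` (F ! i)" if "i < length F" for i and g :: 'g
  proof
    assume "g \<in> (+) g ` (F ! i)"
    then have "0 \<in> F ! i" by (simp add: mem_trans)
    moreover have "F ! i \<inter> H = {}" using disjH nth_mem[OF that] by blast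
    ultimately show False using sg_zero[OF sg] by blast
  qed
  have NP: "nested_BIBD v k 1 (UNIV::'g set) P"
    unfolding nested_BIBD_def
  proof (intro conjI)
    show "BIBD v k 1 UNIV (image_mset fst P)"
      unfolding BIBD_def
    proof (intro conjI ballI impI)
      show "finite (UNIV :: 'g set)" "card (UNIV :: 'g set) = v" using assms(1) by simp_all
    next
      fix B assume "B \<in># image_mset fst P"
      then obtain z where z: "z \<in># P" "B = fst z" by auto
      show "B \<subseteq> UNIV" by simp
      show "card B = k"
      proof (cases "z \<in># P1")
        case True
        then obtain i g where "i < length F" "z = ((+) g ` (F ! i), g)" using memP1 by blast
        then show ?thesis using z cardT cardF nth_mem by simp
      next
        case False
        then have "z \<in># P2" using z unfolding P_def by simp
        then obtain C where "C \<in> ?Cs" "z \<in># Qf C" using memP2 by blast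
        then show ?thesis using QB z unfolding BIBD_def by auto
      qed
    next
      fix x y :: 'g assume "x \<noteq> y"
      then show "size (filter_mset (\<lambda>B. x \<in> B \<and> y \<in> B) (image_mset fst P)) = 1"
        using P1_fst[of x y F] P2f[of x y] dc[of "x - y"]
        unfolding P_def pc_def[symmetric] image_mset_union pc_plus e1 S_def by simp
    qed
  next
    show "\<forall>(B, p)\<in>#P. p \<in> UNIV \<and> p \<notin> B"
    proof
      fix z assume z: "z \<in># P"
      show "case z of (B, p) \<Rightarrow> p \<in> UNIV \<and> p \<notin> B"
      proof (cases "z \<in># P1")
        case True
        then obtain i g where "i < length F" "z = ((+) g ` (F ! i), g)" using memP1 by blast
        then show ?thesis using notin by simp
      next
        case False
        then have "z \<in># P2" using z unfolding P_def by simp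
        then obtain C where C: "C \<in> ?Cs" "z \<in># Qf C" using memP2 by blast
        have "case z of (B, p) \<Rightarrow> p \<in> C \<and> p \<notin> B" using Qn[OF C(1)] C(2) by blast
        then show ?thesis by (auto split: prod.splits)
      qed
    qed
  next
    show "partial_BIBD v (k + 1) (1 + 1) UNIV (image_mset ?I P)"
      unfolding partial_BIBD_def
    proof (intro conjI ballI impI)
      show "finite (UNIV :: 'g set)" "card (UNIV :: 'g set) = v" using assms(1) by simp_all
    next
      fix B assume "B \<in># image_mset ?I P"
      then obtain z where z: "z \<in># P" "B = ?I z" by auto
      show "B \<subseteq> UNIV" by simp
      show "card B = k + 1"
      proof (cases "z \<in># P1")
        case True
        then obtain i g where ig: "i < length F" "z = ((+) g ` (F ! i), g)" using memP1 by blast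
        have "finite (F ! i)" by simp
        then show ?thesis using z ig cardT cardF nth_mem notin[OF ig(1)] by simp
      next
        case False
        then have "z \<in># P2" using z unfolding P_def by simp
        then obtain C where "C \<in> ?Cs" "z \<in># Qf C" using memP2 by blast
        then show ?thesis using QP z unfolding partial_BIBD_def by auto
      qed
    next
      fix x y :: 'g assume xy: "x \<noteq> y"
      have "pc (image_mset ?I P) x y \<le> 2"
        using P1_ins[OF xy BR sg] P2i[OF xy] dc[of "x - y"]
        unfolding P_def image_mset_union pc_plus e2 S_def by (simp split: if_splits)
      then show "size (filter_mset (\<lambda>B. x \<in> B \<and> y \<in> B) (image_mset ?I P)) \<le> 1 + 1"
        unfolding pc_def by simp
    qed
  qed
  have "finite (UNIV :: 'g set)" "finite {0..<v}" "card {0..<v} = card (UNIV :: 'g set)"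
    using assms(1) by simp_all
  then obtain f :: "'g \<Rightarrow> nat" where "bij_betw f UNIV {0..<v}"
    using finite_same_card_bij by metis
  then have "inj_on f UNIV" by (simp add: bij_betw_def)
  from nested_transfer[OF NP this] show ?thesis by blast
qed

end
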